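(* Let $u_{\text{lb}},u_{\text{ub}}\in\mathbb{R}^{n_u}$ with $u_{\text{lb}}\le u_{\text{ub}}$ (componentwise) and let $\mathcal{U}=\{u\in\mathbb{R}^{n_u}\mid u_{\text{lb}}\le u\le u_{\text{ub}}\}$. Let $\mathcal{N}(x;\theta)$ be a ReLU network with $L$ hidden layers and parameters $\theta=\{(W_l,b_l)\}_{l=1}^{L+1}$. Define the network $\mathcal{N}_{\text{sat}}(x)\coloneqq\mathcal{N}(x;\theta_{\text{sat}})$ with $L+2$ hidden layers whose parameters $\theta_{\text{sat}}=\{(W_{l,\text{sat}},b_{l,\text{sat}})\}_{l=1}^{L+3}$ are $(W_{l,\text{sat}},b_{l,\text{sat}})=(W_l,b_l)$ for all $l\in\{1,\dots,L\}$, and $W_{L+1,\text{sat}}=-W_{L+1}$, $b_{L+1,\text{sat}}=u_{\text{ub}}-b_{L+1}$; $W_{L+2,\text{sat}}=-I$, $b_{L+2,\text{sat}}=u_{\text{ub}}-u_{\text{lb}}$; $W_{L+3,\text{sat}}=I$, $b_{L+3,\text{sat}}=u_{\text{lb}}$ (here $I$ is the $n_u\times n_u$ identity). Then $u_{\text{lb}}\le\mathcal{N}_{\text{sat}}(x)\le u_{\text{ub}}$ for all $x\in\mathbb{R}^{n_x}$, and for every $x\in\mathbb{R}^{n_x}$ with $u_{\text{lb}}\le\mathcal{N}(x;\theta)\le u_{\text{ub}}$ one has $\mathcal{N}_{\text{sat}}(x)=\mathcal{N}(x;\theta)$.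
   Context: A ReLU network with $L\ge 1$ hidden layers, input dimension $n_x$, output dimension $n_u$ and hidden widths $n_1,\dots,n_L$ is the map $\mathcal{N}(x;\theta)=W_{L+1}\xi_L+b_{L+1}$, where $\xi_0=x$ and $\xi_l=\max(0,W_l\xi_{l-1}+b_l)$ (maximum taken elementwise) for $l=1,\dots,L$; here $W_1\in\mathbb{R}^{n_1\times n_x}$, $W_l\in\mathbb{R}^{n_l\times n_{l-1}}$ for $2\le l\le L$, $W_{L+1}\in\mathbb{R}^{n_u\times n_L}$, $b_l\in\mathbb{R}^{n_l}$ for $l\le L$ and $b_{L+1}\in\mathbb{R}^{n_u}$. Inequalities between vectors are componentwise. *)

theory Defs
  imports "Jordan_Normal_Form.Matrix"
begin

text \<open>Vectors and matrices are Jordan_Normal_Form vectors/matrices, so that the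
  (layer-dependent) widths are carried by the values.\<close>

type_synonym params = "(real mat \<times> real vec) list"

definition relu :: "real vec \<Rightarrow> real vec" where
  "relu v = map_vec (\<lambda>a. max 0 a) v"

fun hidden :: "params \<Rightarrow> real vec \<Rightarrow> real vec" where
  "hidden [] \<xi> = \<xi>"
| "hidden ((W, b) # ps) \<xi> = hidden ps (relu (W *\<^sub>v \<xi> + b))"

definition net :: "params \<Rightarrow> real vec \<Rightarrow> real vec" where
  "net \<theta> x = (let \<xi> = hidden (butlast \<theta>) x; (W, b) = last \<theta> in W *\<^sub>v \<xi> + b)"

definition valid_net :: "nat \<Rightarrow> nat list \<Rightarrow> nat \<Rightarrow> params \<Rightarrow> bool" where
  "valid_net nx ns nu \<theta> \<longleftrightarrow>
     length ns \<ge> 1 \<and> length \<theta> = length ns + 1 \<and>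
     (let ds = nx # ns @ [nu] in
      \<forall>i < length \<theta>. fst (\<theta> ! i) \<in> carrier_mat (ds ! (i+1)) (ds ! i)
                    \<and> snd (\<theta> ! i) \<in> carrier_vec (ds ! (i+1)))"

definition sat_params :: "nat \<Rightarrow> params \<Rightarrow> real vec \<Rightarrow> real vec \<Rightarrow> params" where
  "sat_params nu \<theta> ulb uub =
     butlast \<theta> @
     [(- fst (last \<theta>), uub - snd (last \<theta>)),
      (- 1\<^sub>m nu, uub - ulb),
      (1\<^sub>m nu, ulb)]"

end

theory Submission
  imports Defs
begin

lemma hidden_append: "hidden (ps @ qs) x = hidden qs (hidden ps x)"
  by (induction ps arbitrary: x) auto

lemma hidden_dim: "ps \<noteq> [] \<Longrightarrow> dim_vec (hidden ps x) = dim_vec (snd (last ps))"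
proof (induction ps arbitrary: x)
  case Nil then show ?case by simp
next
  case (Cons p ps)
  obtain W b where p: "p = (W, b)" by fastforce
  show ?case
  proof (cases "ps = []")
    case True then show ?thesis using p by (simp add: relu_def)
  next
    case False then show ?thesis using Cons p by simp
  qed
qed

lemma clamp_lemma:
  fixes l u y :: real
  assumes "l \<le> u"
  shows "l \<le> max 0 (- max 0 (u - y) + (u - l)) + l"
    and "max 0 (- max 0 (u - y) + (u - l)) + l \<le> u"
    and "l \<le> y \<Longrightarrow> y \<le> u \<Longrightarrow> max 0 (- max 0 (u - y) + (u - l)) + l = y"
  using assms by auto

theorem proposition1:
  fixes nx nu :: nat and ns :: "nat list" and \<theta> :: params and ulb uub :: "real vec"
  assumes "valid_net nx ns nu \<theta>"
    and "ulb \<in> carrier_vec nu" and "uub \<in> carrier_vec nu"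
    and "ulb \<le> uub"
  shows "valid_net nx (ns @ [nu, nu]) nu (sat_params nu \<theta> ulb uub)
    \<and> (\<forall>x \<in> carrier_vec nx.
           ulb \<le> net (sat_params nu \<theta> ulb uub) x \<and> net (sat_params nu \<theta> ulb uub) x \<le> uub)
    \<and> (\<forall>x \<in> carrier_vec nx. ulb \<le> net \<theta> x \<and> net \<theta> x \<le> uub \<longrightarrow>
           net (sat_params nu \<theta> ulb uub) x = net \<theta> x)"
proof -
  define L where "L = length ns"
  have L1: "L \<ge> 1" and len: "length \<theta> = L + 1"
    using assms(1) unfolding valid_net_def L_def by auto
  have V: "\<And>i. i < length \<theta> \<Longrightarrow> fst (\<theta> ! i) \<in> carrier_mat ((nx # ns @ [nu]) ! (i+1)) ((nx # ns @ [nu]) ! i)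
                    \<and> snd (\<theta> ! i) \<in> carrier_vec ((nx # ns @ [nu]) ! (i+1))"
    using assms(1) unfolding valid_net_def Let_def by auto
  obtain \<theta>0 W b where th: "\<theta> = \<theta>0 @ [(W, b)]"
    using len by (metis append_butlast_last_id list.size(3) add_is_0 one_neq_zero surj_pair)
  have len0: "length \<theta>0 = L" using len th by simp
  have WL: "W \<in> carrier_mat nu (last ns)" "b \<in> carrier_vec nu"
  proof -
    have "(nx # ns @ [nu]) ! L = last ns" using L1 unfolding L_def
      by (cases ns rule: rev_cases) (auto simp: nth_append)
    moreover have "(nx # ns @ [nu]) ! (L+1) = nu" unfolding L_def by (simp add: nth_append)
    ultimately show "W \<in> carrier_mat nu (last ns)" "b \<in> carrier_vec nu"
      using V[of L] len th len0 by (auto simp: nth_append)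
  qed
  have th0ne: "\<theta>0 \<noteq> []" using len0 L1 by auto
  have lastdim: "dim_vec (snd (last \<theta>0)) = last ns"
  proof -
    have "last \<theta>0 = \<theta> ! (L - 1)" using th len0 th0ne L1 by (simp add: nth_append last_conv_nth)
    moreover have "(nx # ns @ [nu]) ! (L - 1 + 1) = last ns" using L1 unfolding L_def
      by (cases ns rule: rev_cases) (auto simp: nth_append)
    ultimately show ?thesis using V[of "L-1"] len L1 by auto
  qed
  have hd: "dim_vec (hidden \<theta>0 x) = last ns" for x
    using hidden_dim[OF th0ne] lastdim by simp
  have sp: "sat_params nu \<theta> ulb uub = \<theta>0 @ [(- W, uub - b), (- 1\<^sub>m nu, uub - ulb), (1\<^sub>m nu, ulb)]"
    unfolding sat_params_def th by simp
  have netth: "net \<theta> x = W *\<^sub>v hidden \<theta>0 x + b" for x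
    unfolding net_def th by simp
  define c where "c x = relu (- 1\<^sub>m nu *\<^sub>v relu (- W *\<^sub>v hidden \<theta>0 x + (uub - b)) + (uub - ulb))" for x
  have netsat: "net (sat_params nu \<theta> ulb uub) x = 1\<^sub>m nu *\<^sub>v c x + ulb" for x
    unfolding net_def sp c_def
    by (simp add: hidden_append butlast_append)
  have comp: "i < nu \<Longrightarrow> net (sat_params nu \<theta> ulb uub) x $ i
      = max 0 (- max 0 (uub $ i - net \<theta> x $ i) + (uub $ i - ulb $ i)) + ulb $ i" for x i
  proof -
    assume i: "i < nu"
    define r where "r = relu (- W *\<^sub>v hidden \<theta>0 x + (uub - b))"
    have r: "r \<in> carrier_vec nu" unfolding r_def relu_def using WL assms(3) by (intro map_carrier_vec[THEN iffD2] carrier_vecI) simp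
    have rr: "- W *\<^sub>v hidden \<theta>0 x = - (W *\<^sub>v hidden \<theta>0 x)"
      using WL hd by (intro uminus_mult_mat_vec) auto
    have ri: "r $ i = max 0 (uub $ i - net \<theta> x $ i)"
      unfolding r_def relu_def netth rr using i WL assms(3) by simp
    have cx: "c x = relu (- r + (uub - ulb))" proof -
      have "- 1\<^sub>m nu *\<^sub>v r = - (1\<^sub>m nu *\<^sub>v r)" using r by (intro uminus_mult_mat_vec) auto
      then show ?thesis unfolding c_def r_def[symmetric] using r by simp
    qed
    have cc: "c x \<in> carrier_vec nu" unfolding cx relu_def using assms(2,3) by (intro map_carrier_vec[THEN iffD2] carrier_vecI) simp
    have o: "1\<^sub>m nu *\<^sub>v c x = c x" using cc by simp
    have ci: "c x $ i = max 0 (- r $ i + (uub $ i - ulb $ i))"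
      unfolding cx relu_def using i assms(2,3) r by simp
    show ?thesis unfolding netsat o using i assms(2) ci ri by simp
  qed
  have dimsat: "dim_vec (net (sat_params nu \<theta> ulb uub) x) = nu" for x
    unfolding netsat using assms(2) by simp
  have dimnet: "dim_vec (net \<theta> x) = nu" for x
    unfolding netth using WL by simp
  have le: "\<And>i. i < nu \<Longrightarrow> ulb $ i \<le> uub $ i" using assms(2,3,4) unfolding less_eq_vec_def by auto
  have P2: "\<forall>x \<in> carrier_vec nx.
           ulb \<le> net (sat_params nu \<theta> ulb uub) x \<and> net (sat_params nu \<theta> ulb uub) x \<le> uub"
    using comp dimsat le clamp_lemma(1,2) assms(2,3) unfolding less_eq_vec_def by auto
  have P3: "\<forall>x \<in> carrier_vec nx. ulb \<le> net \<theta> x \<and> net \<theta> x \<le> uub \<longrightarrow>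
           net (sat_params nu \<theta> ulb uub) x = net \<theta> x"
  proof (intro ballI impI)
    fix x assume A: "ulb \<le> net \<theta> x \<and> net \<theta> x \<le> uub"
    have A1: "\<forall>i < dim_vec (net \<theta> x). ulb $ i \<le> net \<theta> x $ i"
      using A unfolding less_eq_vec_def by blast
    have A2: "\<forall>i < dim_vec uub. net \<theta> x $ i \<le> uub $ i"
      using A unfolding less_eq_vec_def by blast
    have "\<And>i. i < nu \<Longrightarrow> ulb $ i \<le> net \<theta> x $ i \<and> net \<theta> x $ i \<le> uub $ i"
      using A1 A2 dimnet assms(3) by simp
    note H = this
    show "net (sat_params nu \<theta> ulb uub) x = net \<theta> x"
    proof (rule eq_vecI)
      show "dim_vec (net (sat_params nu \<theta> ulb uub) x) = dim_vec (net \<theta> x)"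
        using dimsat dimnet by simp
      fix i assume "i < dim_vec (net \<theta> x)"
      then have i: "i < nu" using dimnet by simp
      show "net (sat_params nu \<theta> ulb uub) x $ i = net \<theta> x $ i"
        unfolding comp[OF i] using clamp_lemma(3)[OF le[OF i]] H[OF i] by blast
    qed
  qed
  have P1len: "length (sat_params nu \<theta> ulb uub) = length (ns @ [nu, nu]) + 1"
    using sp len0 unfolding L_def by simp
  have P1i: "fst (sat_params nu \<theta> ulb uub ! i) \<in> carrier_mat ((nx # (ns @ [nu, nu]) @ [nu]) ! (i + 1)) ((nx # (ns @ [nu, nu]) @ [nu]) ! i) \<and>
         snd (sat_params nu \<theta> ulb uub ! i) \<in> carrier_vec ((nx # (ns @ [nu, nu]) @ [nu]) ! (i + 1))"
    if i: "i < length (sat_params nu \<theta> ulb uub)" for i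
  proof -
    have i3: "i < L + 3" using i sp len0 by simp
    consider "i < L" | "i = L" | "i = L + 1" | "i = L + 2" using i3 by linarith
    then show "fst (sat_params nu \<theta> ulb uub ! i) \<in> carrier_mat ((nx # (ns @ [nu, nu]) @ [nu]) ! (i + 1)) ((nx # (ns @ [nu, nu]) @ [nu]) ! i) \<and>
         snd (sat_params nu \<theta> ulb uub ! i) \<in> carrier_vec ((nx # (ns @ [nu, nu]) @ [nu]) ! (i + 1))"
    proof cases
      case 1
      have e1: "(nx # (ns @ [nu, nu]) @ [nu]) ! (i + 1) = (nx # ns @ [nu]) ! (i+1)"
        using 1 unfolding L_def by (simp add: nth_append)
      have e2: "(nx # (ns @ [nu, nu]) @ [nu]) ! i = (nx # ns @ [nu]) ! i"
        using 1 unfolding L_def by (cases i) (auto simp: nth_append)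
      have "sat_params nu \<theta> ulb uub ! i = \<theta> ! i" using 1 sp th len0 by (simp add: nth_append)
      then show ?thesis using V[of i] 1 len e1 e2 by simp
    next
      case 2
      have e1: "(nx # (ns @ [nu, nu]) @ [nu]) ! (i + 1) = nu"
        using 2 unfolding L_def by (simp add: nth_append)
      have e2: "(nx # (ns @ [nu, nu]) @ [nu]) ! i = last ns"
        using 2 L1 unfolding L_def by (cases ns rule: rev_cases) (auto simp: nth_append)
      have "sat_params nu \<theta> ulb uub ! i = (- W, uub - b)" using 2 sp len0 by (simp add: nth_append)
      then show ?thesis using e1 e2 WL assms(3) by simp
    next
      case 3
      have e1: "(nx # (ns @ [nu, nu]) @ [nu]) ! (i + 1) = nu"
        using 3 unfolding L_def by (simp add: nth_append)
      have e2: "(nx # (ns @ [nu, nu]) @ [nu]) ! i = nu"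
        using 3 unfolding L_def by (simp add: nth_append)
      have "sat_params nu \<theta> ulb uub ! i = (- 1\<^sub>m nu, uub - ulb)" using 3 sp len0 by (simp add: nth_append)
      then show ?thesis using e1 e2 assms(2,3) by simp
    next
      case 4
      have e1: "(nx # (ns @ [nu, nu]) @ [nu]) ! (i + 1) = nu"
        using 4 unfolding L_def by (simp add: nth_append)
      have e2: "(nx # (ns @ [nu, nu]) @ [nu]) ! i = nu"
        using 4 unfolding L_def by (simp add: nth_append)
      have "sat_params nu \<theta> ulb uub ! i = (1\<^sub>m nu, ulb)" using 4 sp len0 by (simp add: nth_append)
      then show ?thesis using e1 e2 assms(2) by simp
    qed
  qed
  have P1: "valid_net nx (ns @ [nu, nu]) nu (sat_params nu \<theta> ulb uub)"
    unfolding valid_net_def Let_def using P1len P1i by (intro conjI allI impI) simp_all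
  show ?thesis using P1 P2 P3 by blast
qed

end
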